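(* Let $\mathbf{X}$ and $\mathbf{Y}$ be Euclidean spaces, let $M\subset\mathbf{Y}$ and $\bar y\in M$, and let $F\colon\mathbf{X}\to\mathbf{Y}$ be a local coordinate system for $M$ around $\bar y$: $F$ is continuously differentiable and its restriction to an open set $U\subset\mathbf{X}$ is a diffeomorphism onto an open neighborhood $V$ of $\bar y$ in $M$. Define $\Phi\colon V\times\mathbf{Y}\to\mathbf{Y}$ by \[ \Phi\big(F(x),y\big) = F(x+s)\quad\text{where } s\in\mathbf{X} \text{ minimizes } |F(x)+\nabla F(x)s-y|, \] for $x\in U$ and $y\in\mathbf{Y}$ (the minimizer $s$ being unique since $\nabla F(x)$ is one-to-one). Then $\Phi$ is a faithful approximation of the projection for the manifold $M$ around $\bar y$.
   Context: $P_M(y)$ denotes the set of nearest points of $M$ to $y$. A faithful approximation of the projection onto $M$ around $\bar y$ is a map $\Phi\colon V\times\mathbf{Y}\to M$, where $V$ is a neighborhood of $\bar y$ in $M$, such that: given any constant $\epsilon>0$ and angle $\alpha>0$, if points $z\in M$ and $y\notin M$ are sufficiently close to $\bar y$, then any point $\hat z\in P_M(y)$ such that the angle between the vectors $z-y$ and $\hat z-y$ is at least $\alpha$ satisfies $|\hat z-\Phi(z,y)|\le\epsilon|y-z|$. *)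

theory Defs
  imports "HOL-Analysis.Analysis"
begin

definition nearest_points :: "'b::euclidean_space set \<Rightarrow> 'b \<Rightarrow> 'b set" where
  "nearest_points M y = {z \<in> M. \<forall>w\<in>M. dist y z \<le> dist y w}"

text \<open>Angle between two vectors (used only for nonzero vectors).\<close>
definition vec_angle :: "'b::euclidean_space \<Rightarrow> 'b \<Rightarrow> real" where
  "vec_angle u v = arccos (inner u v / (norm u * norm v))"

definition faithful_approx ::
  "'b::euclidean_space set \<Rightarrow> 'b \<Rightarrow> 'b set \<Rightarrow> ('b \<Rightarrow> 'b \<Rightarrow> 'b) \<Rightarrow> bool" where
  "faithful_approx M ybar V Phi \<longleftrightarrow>
     V \<subseteq> M \<and> ybar \<in> V \<and> (\<exists>W. openin (top_of_set M) W \<and> ybar \<in> W \<and> W \<subseteq> V) \<and>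
     (\<forall>\<epsilon>>0. \<forall>\<alpha>>0. \<exists>\<delta>>0. \<forall>z y zh.
        z \<in> M \<and> y \<notin> M \<and> dist z ybar < \<delta> \<and> dist y ybar < \<delta> \<and>
        zh \<in> nearest_points M y \<and> vec_angle (z - y) (zh - y) \<ge> \<alpha>
        \<longrightarrow> norm (zh - Phi z y) \<le> \<epsilon> * norm (y - z))"

end

theory Submission
  imports Defs
begin

lemma orth_of_min:
  fixes a :: "'b::euclidean_space" and A :: "'a::euclidean_space \<Rightarrow>\<^sub>L 'b"
  assumes "\<forall>t. norm (a + A s) \<le> norm (a + A t)"
  shows "inner (a + A s) (A v) = 0"
proof -
  define e where "e = a + A s"
  define p where "p = inner e (A v)"
  define q where "q = inner (A v) (A v)"
  have q0: "q \<ge> 0" unfolding q_def by simp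
  have key: "0 \<le> 2*l*p + l*l*q" for l
  proof -
    have "norm e \<le> norm (a + A (s + l *\<^sub>R v))" using assms e_def by blast
    also have "a + A (s + l *\<^sub>R v) = e + l *\<^sub>R A v"
      by (simp add: e_def blinfun.add_right blinfun.scaleR_right algebra_simps)
    finally have "(norm e)^2 \<le> (norm (e + l *\<^sub>R A v))^2"
      by (simp add: power_mono)
    then show ?thesis
      by (simp add: power2_norm_eq_inner inner_simps p_def q_def inner_commute algebra_simps)
  qed
  define l where "l = -p/(q+1)"
  have q1: "q + 1 \<noteq> 0" using q0 by linarith
  have lq: "l*(q+1) = -p" using q1 by (simp add: l_def)
  have "0 \<le> 2*l*p + l*l*q" by (rule key)
  then have "0 \<le> (2*l*p + l*l*q)*((q+1)*(q+1))" by simp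
  also have "(2*l*p + l*l*q)*((q+1)*(q+1)) = 2*(l*(q+1))*p*(q+1) + (l*(q+1))*(l*(q+1))*q"
    by (simp add: algebra_simps)
  also have "\<dots> = -(p*p*(q+2))" unfolding lq by (simp add: algebra_simps)
  finally have "p*p*(q+2) \<le> 0" by simp
  then have "p*p \<le> 0" using q0
    by (smt (verit) mult_nonneg_nonneg zero_le_square mult_pos_pos)
  then have "p = 0" by (metis mult_eq_0_iff not_square_less_zero order_antisym zero_le_square)
  then show ?thesis unfolding p_def e_def .
qed

lemma core_est:
  fixes e r d rho :: "'b::euclidean_space" and A B :: "'a::euclidean_space \<Rightarrow>\<^sub>L 'b"
  assumes "\<And>v. inner e (A v) = 0" "\<And>v. inner r (B v) = 0"
    and "d = e - r" "d = A u + rho" "norm e \<le> D" "norm r \<le> D"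
    and "norm rho \<le> k1" "norm u \<le> k2" "norm (A - B) \<le> m"
  shows "(norm d)^2 \<le> 2 * k1 * D + m * k2 * D"
proof -
  have D0: "0 \<le> D" using assms(5) norm_ge_zero order_trans by blast
  have "(norm d)^2 = inner d e - inner d r" using assms(3)
    by (simp add: power2_norm_eq_inner inner_diff_right)
  also have "inner d e = inner rho e"
  proof -
    have "inner d e = inner (A u) e + inner rho e" using assms(4) by (simp add: inner_add_left)
    moreover have "inner (A u) e = 0" using assms(1)[of u] by (simp add: inner_commute)
    ultimately show ?thesis by simp
  qed
  also have "inner d r = inner ((A - B) u) r + inner rho r"
  proof -
    have "inner d r = inner (A u) r + inner rho r" using assms(4) by (simp add: inner_add_left)
    moreover have "inner ((A - B) u) r = inner (A u) r - inner (B u) r"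
      by (simp add: blinfun.diff_left inner_diff_left)
    moreover have "inner (B u) r = 0" using assms(2)[of u] by (simp add: inner_commute)
    ultimately show ?thesis by simp
  qed
  finally have eq: "(norm d)^2 = inner rho e - inner ((A - B) u) r - inner rho r" by simp
  have "\<bar>inner rho e\<bar> \<le> k1 * D"
    using Cauchy_Schwarz_ineq2[of rho e] assms(5,7) D0
    by (meson mult_mono norm_ge_zero order_trans)
  moreover have "\<bar>inner rho r\<bar> \<le> k1 * D"
    using Cauchy_Schwarz_ineq2[of rho r] assms(6,7) D0
    by (meson mult_mono norm_ge_zero order_trans)
  moreover have "\<bar>inner ((A - B) u) r\<bar> \<le> m * k2 * D"
  proof -
    have "norm ((A - B) u) \<le> norm (A - B) * norm u" by (rule norm_blinfun)
    also have "\<dots> \<le> m * k2" using assms(8,9)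
      by (meson mult_mono norm_ge_zero order_trans)
    finally show ?thesis
      using Cauchy_Schwarz_ineq2[of "(A - B) u" r] assms(6) D0
      by (smt (verit) mult_mono norm_ge_zero)
  qed
  ultimately show ?thesis using eq by linarith
qed


lemma fermat_orth:
  fixes F :: "'a::euclidean_space \<Rightarrow> 'b::euclidean_space" and F' :: "'a \<Rightarrow> ('a \<Rightarrow>\<^sub>L 'b)"
  assumes deriv: "\<And>x. (F has_derivative blinfun_apply (F' x)) (at x)"
    and "open U" "xh \<in> U" and mn: "\<forall>\<xi>\<in>U. dist y (F xh) \<le> dist y (F \<xi>)"
  shows "inner (y - F xh) (F' xh v) = 0"
proof -
  define f where "f \<xi> = inner (y - F \<xi>) (y - F \<xi>)" for \<xi>
  have d: "(f has_derivative (\<lambda>h. inner (y - F xh) (- F' xh h) + inner (- F' xh h) (y - F xh))) (at xh)"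
    unfolding f_def
    by (intro has_derivative_inner has_derivative_diff[where f'="\<lambda>_. 0", simplified] has_derivative_const deriv)
  have "\<forall>\<xi>\<in>U. f xh \<le> f \<xi>"
  proof
    fix \<xi> assume "\<xi> \<in> U"
    then have "dist y (F xh) \<le> dist y (F \<xi>)" using mn by blast
    then have "(dist y (F xh))^2 \<le> (dist y (F \<xi>))^2" by (simp add: power_mono)
    then show "f xh \<le> f \<xi>" by (simp add: f_def dist_norm power2_norm_eq_inner)
  qed
  then have "(\<lambda>h. inner (y - F xh) (- F' xh h) + inner (- F' xh h) (y - F xh)) = (\<lambda>v. 0)"
    using differential_zero_maxmin[OF assms(3,2) d] by blast
  then have "inner (y - F xh) (- F' xh v) + inner (- F' xh v) (y - F xh) = 0" by meson
  then show ?thesis by (simp add: inner_commute)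
qed

lemma c1_est:
  fixes F :: "'a::euclidean_space \<Rightarrow> 'b::euclidean_space" and F' :: "'a \<Rightarrow> ('a \<Rightarrow>\<^sub>L 'b)"
  assumes deriv: "\<And>x. (F has_derivative blinfun_apply (F' x)) (at x)"
    and bd: "\<And>\<xi>. \<xi> \<in> ball xb r \<Longrightarrow> norm (F' \<xi> - L) \<le> \<eta>"
    and "a \<in> ball xb r" "b \<in> ball xb r" "x0 \<in> ball xb r"
  shows "norm (F b - F a - F' x0 (b - a)) \<le> norm (b - a) * (2*\<eta>)"
proof (rule differentiable_bound_linearization[where S="ball xb r"])
  show "a + t *\<^sub>R (b - a) \<in> ball xb r" if "t \<in> {0..1}" for t
  proof -
    have "(1 - t) *\<^sub>R a + t *\<^sub>R b \<in> ball xb r"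
      using convexD_alt[OF convex_ball assms(3,4)] that by auto
    moreover have "(1 - t) *\<^sub>R a + t *\<^sub>R b = a + t *\<^sub>R (b - a)" by (simp add: algebra_simps)
    ultimately show ?thesis by simp
  qed
  show "(F has_derivative blinfun_apply (F' x)) (at x within ball xb r)" for x
    using deriv has_derivative_at_withinI by blast
  show "x0 \<in> ball xb r" by fact
  show "onorm (blinfun_apply (F' x) - blinfun_apply (F' x0)) \<le> 2 * \<eta>" if "x \<in> ball xb r" for x
  proof -
    have "onorm (blinfun_apply (F' x) - blinfun_apply (F' x0)) = norm (F' x - F' x0)"
      by (simp add: norm_blinfun.rep_eq minus_blinfun.rep_eq fun_diff_def)
    also have "\<dots> \<le> norm (F' x - L) + norm (F' x0 - L)"
      using norm_triangle_ineq4[of "F' x - L" "F' x0 - L"] by simp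
    also have "\<dots> \<le> 2 * \<eta>" using bd[OF that] bd[OF assms(5)] by simp
    finally show ?thesis .
  qed
qed


theorem mainTheorem5:
  fixes M :: "'b::euclidean_space set" and ybar :: 'b
    and F :: "'a::euclidean_space \<Rightarrow> 'b" and F' :: "'a \<Rightarrow> ('a \<Rightarrow>\<^sub>L 'b)"
    and U :: "'a set" and V :: "'b set" and Phi :: "'b \<Rightarrow> 'b \<Rightarrow> 'b"
  assumes "ybar \<in> M"
    and deriv: "\<And>x. (F has_derivative blinfun_apply (F' x)) (at x)"
    and cont: "continuous_on UNIV F'"
    and "open U"
    and "V = F ` U" and "V \<subseteq> M" and "openin (top_of_set M) V" and "ybar \<in> V"
    and "\<exists>G. homeomorphism U V F G"
    and "\<And>x. x \<in> U \<Longrightarrow> inj (blinfun_apply (F' x))"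
    and Phi_def: "\<And>x y s. x \<in> U \<Longrightarrow>
        (\<forall>t. norm (F x + F' x s - y) \<le> norm (F x + F' x t - y)) \<Longrightarrow>
        Phi (F x) y = F (x + s)"
  shows "faithful_approx M ybar V Phi"
proof -
  obtain G where hom: "homeomorphism U V F G" using assms(9) by blast
  have GU: "\<And>z. z \<in> V \<Longrightarrow> G z \<in> U" and FG: "\<And>z. z \<in> V \<Longrightarrow> F (G z) = z"
    and FV: "\<And>x. x \<in> U \<Longrightarrow> F x \<in> V" and contG: "continuous_on V G"
    using hom unfolding homeomorphism_def by auto
  define xb where "xb = G ybar"
  have xbU: "xb \<in> U" and Fxb: "F xb = ybar" using GU FG assms(8) xb_def by auto
  define L where "L = F' xb"
  have "linear (blinfun_apply L)" by (simp add: blinfun.bounded_linear_right bounded_linear.linear)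
  then obtain c0 where c0: "c0 > 0" "\<And>v. c0 * norm v \<le> norm (L v)"
    using linear_inj_bounded_below_pos[of "blinfun_apply L"] assms(10)[OF xbU] L_def by blast
  define c where "c = c0 / 2"
  have c: "c > 0" "\<And>v. 2 * c * norm v \<le> norm (L v)" using c0 by (simp_all add: c_def)
  have V_M: "V \<subseteq> M" by fact
  show ?thesis unfolding faithful_approx_def
  proof (intro conjI allI impI)
    show "V \<subseteq> M" "ybar \<in> V" by fact+
    show "\<exists>W. openin (top_of_set M) W \<and> ybar \<in> W \<and> W \<subseteq> V" using assms(7,8) by blast
    fix \<epsilon> \<alpha> :: real assume \<epsilon>: "\<epsilon> > 0" and "\<alpha> > 0"
    define \<eta> where "\<eta> = min (c/2) (min (c*\<epsilon>^2/64) (c*\<epsilon>/8))"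
    have \<eta>0: "\<eta> > 0" using c \<epsilon> by (simp add: \<eta>_def)
    have \<eta>1: "\<eta> \<le> c/2" "\<eta> \<le> c*\<epsilon>^2/64" "\<eta> \<le> c*\<epsilon>/8" by (auto simp: \<eta>_def)
    obtain r1 where r1: "r1 > 0" "\<And>\<xi>. dist \<xi> xb < r1 \<Longrightarrow> dist (F' \<xi>) (F' xb) < \<eta>"
      using cont \<eta>0 unfolding continuous_on_iff by (metis UNIV_I)
    obtain r2 where r2: "r2 > 0" "ball xb r2 \<subseteq> U" using assms(4) xbU open_contains_ball by blast
    define r0 where "r0 = min r1 r2"
    have r0: "r0 > 0" using r1 r2 by (simp add: r0_def)
    have ballU: "ball xb r0 \<subseteq> U" using r2 by (auto simp: r0_def)
    have bd: "\<And>\<xi>. \<xi> \<in> ball xb r0 \<Longrightarrow> norm (F' \<xi> - L) \<le> \<eta>"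
    proof -
      fix \<xi> assume "\<xi> \<in> ball xb r0"
      then have "dist \<xi> xb < r1" by (simp add: r0_def dist_commute)
      then show "norm (F' \<xi> - L) \<le> \<eta>" using r1 by (simp add: L_def dist_norm less_imp_le)
    qed
    obtain d1 where d1: "d1 > 0" "\<And>z. z \<in> V \<Longrightarrow> dist z ybar < d1 \<Longrightarrow> dist (G z) xb < r0/2"
      using contG assms(8) r0 unfolding continuous_on_iff xb_def
      by (metis half_gt_zero)
    obtain d2 where d2: "d2 > 0" "\<And>z. z \<in> M \<Longrightarrow> dist z ybar < d2 \<Longrightarrow> z \<in> V"
      using assms(7,8) unfolding openin_euclidean_subtopology_iff by blast
    define \<delta> where "\<delta> = min (min d1 d2 / 2) (c*r0/8)"
    have \<delta>0: "\<delta> > 0" using d1 d2 c r0 by (simp add: \<delta>_def)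
    show "\<exists>\<delta>>0. \<forall>z y zh. z \<in> M \<and> y \<notin> M \<and> dist z ybar < \<delta> \<and> dist y ybar < \<delta> \<and>
        zh \<in> nearest_points M y \<and> vec_angle (z - y) (zh - y) \<ge> \<alpha>
        \<longrightarrow> norm (zh - Phi z y) \<le> \<epsilon> * norm (y - z)"
    proof (intro exI[of _ \<delta>] conjI allI impI \<delta>0, elim conjE)
      fix z y zh
      assume zM: "z \<in> M" and yM: "y \<notin> M" and dz: "dist z ybar < \<delta>" and dy: "dist y ybar < \<delta>"
        and zh: "zh \<in> nearest_points M y"
      have zhM: "zh \<in> M" and near: "\<And>w. w \<in> M \<Longrightarrow> dist y zh \<le> dist y w"
        using zh unfolding nearest_points_def by auto
      define D where "D = norm (y - z)"
      have "dist y zh \<le> dist y ybar" using near assms(1) .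
      then have dzh: "dist zh ybar < 2*\<delta>" using dy dist_triangle[of zh ybar y]
        by (simp add: dist_commute)
      have Dlt: "D < 2*\<delta>" using dz dy dist_triangle[of y z ybar] by (simp add: D_def dist_norm norm_minus_commute)
      have nr: "norm (y - zh) \<le> D" using near[OF zM] by (simp add: D_def dist_norm)
      have zV: "z \<in> V" using d2 zM dz by (auto simp: \<delta>_def)
      have zhV: "zh \<in> V" using d2 zhM dzh by (auto simp: \<delta>_def)
      define x where "x = G z"
      define xh where "xh = G zh"
      have xU: "x \<in> U" and Fx: "F x = z" using GU FG zV x_def by auto
      have xhU: "xh \<in> U" and Fxh: "F xh = zh" using GU FG zhV xh_def by auto
      have xdist: "dist x xb < r0/2" using d1 zV dz by (auto simp: \<delta>_def x_def)
      have xhdist: "dist xh xb < r0/2" using d1 zhV dzh by (auto simp: \<delta>_def xh_def)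
      have xball: "x \<in> ball xb r0" and xhball: "xh \<in> ball xb r0" and xbball: "xb \<in> ball xb r0"
        using xdist xhdist r0 by (auto simp: dist_commute)
      have Dc: "D < c*r0/4" using Dlt by (simp add: \<delta>_def)
      define A where "A = F' x"
      define B where "B = F' xh"
      have AL: "norm (A - L) \<le> \<eta>" using bd xball A_def by blast
      have BL: "norm (B - L) \<le> \<eta>" using bd xhball B_def by blast
      have AB: "norm (A - B) \<le> 2*\<eta>"
        using norm_triangle_ineq4[of "A - L" "B - L"] AL BL by simp
      have Alow: "c * norm v \<le> norm (A v)" for v
      proof -
        have "norm ((A - L) v) \<le> \<eta> * norm v"
          using norm_blinfun[of "A - L" v] AL by (meson mult_right_mono norm_ge_zero order_trans)
        moreover have "(A - L) v = A v - L v" by (simp add: blinfun.diff_left)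
        ultimately have 1: "norm (A v - L v) \<le> \<eta> * norm v" by simp
        have 2: "\<eta> * norm v \<le> c * norm v / 2" using \<eta>1(1) mult_right_mono[of \<eta> "c/2" "norm v"] by simp
        have 3: "norm (L v - A v) = norm (A v - L v)" by (rule norm_minus_commute)
        have 4: "2 * c * norm v \<le> norm (L v)" by (rule c(2))
        have 5: "0 \<le> c * norm v" using c(1) by simp
        show ?thesis using 1 2 3 4 5 norm_triangle_ineq2[of "L v" "A v"] by linarith
      qed
      have Flow: "c * norm (b - a) \<le> norm (F b - F a)" if "a \<in> ball xb r0" "b \<in> ball xb r0" for a b
      proof -
        have "norm (F b - F a - L (b - a)) \<le> norm (b - a) * (2*\<eta>)"
          using c1_est[OF deriv bd that xbball] L_def by simp
        moreover have "norm (b - a) * (2*\<eta>) \<le> norm (b - a) * c" using \<eta>1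
          by (simp add: mult_left_mono)
        moreover have "norm (L (b - a) - (F b - F a)) = norm (F b - F a - L (b - a))"
          by (rule norm_minus_commute)
        moreover have "norm (b - a) * c = c * norm (b - a)" by (rule mult.commute)
        ultimately show ?thesis using c(2)[of "b - a"] norm_triangle_ineq2[of "L (b - a)" "F b - F a"]
          by linarith
      qed
      define S where "S = range (blinfun_apply A)"
      have Sc: "closed S" unfolding S_def
        by (intro closed_subspace linear_subspace_image subspace_UNIV)
          (simp add: blinfun.bounded_linear_right bounded_linear.linear)
      have "closest_point S (y - z) \<in> S" using closest_point_in_set[OF Sc] S_def by blast
      then obtain s where s: "A s = closest_point S (y - z)" unfolding S_def by auto
      have smin: "\<forall>t. norm (F x + F' x s - y) \<le> norm (F x + F' x t - y)"
      proof
        fix t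
        have "dist (y - z) (A s) \<le> dist (y - z) (A t)"
          unfolding s by (rule closest_point_le[OF Sc]) (simp add: S_def)
        then show "norm (F x + F' x s - y) \<le> norm (F x + F' x t - y)"
          by (simp add: Fx A_def dist_norm norm_minus_commute algebra_simps)
      qed
      have Phi_eq: "Phi z y = F (x + s)" using Phi_def[OF xU smin] Fx by simp
      define e where "e = y - z - A s"
      have e_orth: "\<And>v. inner e (A v) = 0"
      proof -
        fix v
        have "\<forall>t. norm ((z - y) + A s) \<le> norm ((z - y) + A t)"
          using smin by (simp add: Fx A_def algebra_simps)
        then have "inner ((z - y) + A s) (A v) = 0" by (rule orth_of_min)
        moreover have "e = - ((z - y) + A s)" by (simp add: e_def)
        ultimately show "inner e (A v) = 0" by (simp only: inner_minus_left)
      qed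
      have ne: "norm e \<le> D"
        using spec[OF smin, of 0] by (simp add: e_def Fx A_def D_def norm_minus_commute algebra_simps)
      have nAs: "norm (A s) \<le> 2*D"
      proof -
        have "A s = (y - z) - e" by (simp add: e_def)
        then have "norm (A s) \<le> norm (y - z) + norm e" by (metis norm_triangle_ineq4)
        then show ?thesis using ne D_def by simp
      qed
      have ns: "norm s \<le> 2*D/c"
        using Alow[of s] nAs c(1) by (simp add: pos_le_divide_eq mult.commute)
      have xsball: "x + s \<in> ball xb r0"
      proof -
        have "2*D/c < r0/2" using Dc c(1) by (simp add: field_simps)
        then have "dist xb (x + s) < r0"
        proof -
          have "dist x (x + s) = norm s" by (simp add: dist_norm)
          moreover have "dist xb x = dist x xb" by (rule dist_commute)
          ultimately show ?thesis using xdist ns dist_triangle[of xb "x+s" x] \<open>2*D/c < r0/2\<close>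
            by linarith
        qed
        then show ?thesis by simp
      qed
      define r where "r = y - zh"
      have r_orth: "\<And>v. inner r (B v) = 0"
      proof -
        fix v
        have "\<forall>\<xi>\<in>U. dist y (F xh) \<le> dist y (F \<xi>)"
          using near FV V_M Fxh by blast
        then show "inner r (B v) = 0"
          using fermat_orth[OF deriv assms(4) xhU] by (simp add: r_def B_def Fxh)
      qed
      have nxx: "norm (xh - x) \<le> 2*D/c"
      proof -
        have "zh - z = (y - z) - (y - zh)" by simp
        then have "norm (zh - z) \<le> norm (y - zh) + norm (y - z)"
          using norm_triangle_ineq4[of "y - z" "y - zh"] by simp
        then have "norm (zh - z) \<le> 2*D" using nr D_def by simp
        then have "c * norm (xh - x) \<le> 2*D" using Flow[OF xball xhball] Fx Fxh by simp
        then show ?thesis using c(1) by (simp add: pos_le_divide_eq mult.commute)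
      qed
      define rho1 where "rho1 = F xh - F x - A (xh - x)"
      define rho2 where "rho2 = F (x + s) - F x - A s"
      have D0: "0 \<le> D" by (simp add: D_def)
      have nrho1: "norm rho1 \<le> 4*\<eta>*D/c"
      proof -
        have "norm rho1 \<le> norm (xh - x) * (2*\<eta>)"
          using c1_est[OF deriv bd xball xhball xball] by (simp add: rho1_def A_def)
        also have "\<dots> \<le> (2*D/c) * (2*\<eta>)" using nxx \<eta>0 by (intro mult_right_mono) auto
        also have "\<dots> = 4*\<eta>*D/c" by simp
        finally show ?thesis .
      qed
      have nrho2: "norm rho2 \<le> 4*\<eta>*D/c"
      proof -
        have "norm rho2 \<le> norm (x + s - x) * (2*\<eta>)"
          using c1_est[OF deriv bd xball xsball xball] by (simp add: rho2_def A_def)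
        also have "\<dots> \<le> (2*D/c) * (2*\<eta>)" using ns \<eta>0 by (intro mult_right_mono) auto
        also have "\<dots> = 4*\<eta>*D/c" by simp
        finally show ?thesis .
      qed
      define u where "u = xh - x - s"
      have nu: "norm u \<le> 4*D/c"
        using norm_triangle_ineq4[of "xh - x" s] nxx ns by (simp add: u_def)
      define d where "d = zh - (z + A s)"
      have d1': "d = e - r" by (simp add: d_def e_def r_def)
      have d2': "d = A u + rho1"
        by (simp add: d_def u_def rho1_def Fx Fxh blinfun.diff_right)
      have "(norm d)^2 \<le> 2 * (4*\<eta>*D/c) * D + (2*\<eta>) * (4*D/c) * D"
        by (rule core_est[OF e_orth r_orth d1' d2' ne nr[folded r_def] nrho1 nu AB])
      also have "\<dots> = 16 * \<eta> / c * D^2" by (simp add: power2_eq_square)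
      also have "\<dots> \<le> 16 * (c*\<epsilon>^2/64) / c * D^2"
        using \<eta>1 c(1) by (intro mult_right_mono divide_right_mono) auto
      also have "\<dots> = (\<epsilon>/2 * D)^2" using c(1) by (simp add: power_mult_distrib power_divide)
      finally have nd2: "(norm d)^2 \<le> (\<epsilon>/2 * D)^2" .
      have nd: "norm d \<le> \<epsilon>/2 * D"
        using \<epsilon> D0 by (intro power2_le_imp_le[OF nd2]) simp
      have "4*\<eta>*D/c \<le> 4*(c*\<epsilon>/8)*D/c"
        using \<eta>1 c(1) D0 by (intro divide_right_mono mult_right_mono) (auto simp: mult.commute)
      also have "\<dots> = \<epsilon>/2 * D" using c(1) by simp
      finally have nrho2': "norm rho2 \<le> \<epsilon>/2 * D" using nrho2 by linarith
      have "zh - Phi z y = d - rho2"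
        by (simp add: Phi_eq d_def rho2_def Fx)
      then have "norm (zh - Phi z y) \<le> norm d + norm rho2" by (simp add: norm_triangle_ineq4)
      also have "\<dots> \<le> \<epsilon> * D" using nd nrho2' by simp
      finally show "norm (zh - Phi z y) \<le> \<epsilon> * norm (y - z)" by (simp add: D_def)
    qed
  qed
qed

end
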